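(* Let $H_1,\dots,H_n$ be null hypotheses with $p$-values $PV_1,\dots,PV_n\in[0,1]$ that may have an arbitrary joint dependence structure. Let $I\subseteq\{1,\dots,n\}$ be the set of true null hypotheses, and for each $i$ let $F_i$ be the null distribution function of $PV_i$ (so that $P(PV_j\le x)=F_j(x)$ for $j\in I$), satisfying $F_i(u)\le u$ for all $u\in(0,1)$. Let $G(x)=\sum_{i=1}^n F_i(x)$ for $x\in[0,1]$. Then for every sequence of critical values $0\le c_1\le c_2\le\cdots\le c_n\le 1$, setting $c_0=0$, the step-up procedure with critical values $c$ satisfies $$\mathrm{FDR}(c)\le \sum_{r=1}^n\sum_{j\in I}\frac{1}{r}\bigl(F_j(c_r)-F_j(c_{r-1})\bigr)\le \sum_{r=1}^n\frac{1}{r}\bigl(G(c_r)-G(c_{r-1})\bigr).$$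
   Context: Step-up procedure with critical values $c_1\le\cdots\le c_n$: let $PV_{(1)}\le\cdots\le PV_{(n)}$ be the ordered $p$-values with corresponding hypotheses $H_{(1)},\dots,H_{(n)}$; let $k=\max\{i: PV_{(i)}\le c_i\}$ and reject $H_{(1)},\dots,H_{(k)}$; if no such $i$ exists, reject nothing. With $R$ the number of rejections and $V$ the number of rejected true null hypotheses, $\mathrm{FDR}(c)=E[V/\max(R,1)]$. *)

theory Defs
  imports "HOL-Probability.Probability"
begin

text \<open>Hypotheses are indexed by 1..n; PV i w is the p-value of H_i at outcome w.\<close>

definition ordered_pv :: "(nat \<Rightarrow> 'a \<Rightarrow> real) \<Rightarrow> nat \<Rightarrow> 'a \<Rightarrow> nat \<Rightarrow> real" where
  "ordered_pv PV n w i = sort (map (\<lambda>j. PV j w) [1..<Suc n]) ! (i - 1)"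

text \<open>k = max{i : PV_(i) <= c_i}, and 0 if no such i; this is also R, the number of rejections.\<close>
definition stepup_k :: "(nat \<Rightarrow> 'a \<Rightarrow> real) \<Rightarrow> nat \<Rightarrow> (nat \<Rightarrow> real) \<Rightarrow> 'a \<Rightarrow> nat" where
  "stepup_k PV n c w =
     (if \<exists>i\<in>{1..n}. ordered_pv PV n w i \<le> c i
      then Max {i\<in>{1..n}. ordered_pv PV n w i \<le> c i} else 0)"

definition stepup_rejected :: "(nat \<Rightarrow> 'a \<Rightarrow> real) \<Rightarrow> nat \<Rightarrow> (nat \<Rightarrow> real) \<Rightarrow> 'a \<Rightarrow> nat set" where
  "stepup_rejected PV n c w =
     (let k = stepup_k PV n c w in
      if k = 0 then {} else {i\<in>{1..n}. PV i w \<le> ordered_pv PV n w k})"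

definition stepup_R :: "(nat \<Rightarrow> 'a \<Rightarrow> real) \<Rightarrow> nat \<Rightarrow> (nat \<Rightarrow> real) \<Rightarrow> 'a \<Rightarrow> nat" where
  "stepup_R PV n c w = card (stepup_rejected PV n c w)"

definition stepup_V :: "(nat \<Rightarrow> 'a \<Rightarrow> real) \<Rightarrow> nat \<Rightarrow> (nat \<Rightarrow> real) \<Rightarrow> nat set \<Rightarrow> 'a \<Rightarrow> nat" where
  "stepup_V PV n c I w = card (stepup_rejected PV n c w \<inter> I)"

definition FDR :: "'a measure \<Rightarrow> (nat \<Rightarrow> 'a \<Rightarrow> real) \<Rightarrow> nat \<Rightarrow> (nat \<Rightarrow> real) \<Rightarrow> nat set \<Rightarrow> real" where
  "FDR M PV n c I =
     (\<integral>w. real (stepup_V PV n c I w) / max (real (stepup_R PV n c w)) 1 \<partial>M)"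

end

theory Submission imports Defs begin

lemma card_rej:
  assumes "1 \<le> k" "k \<le> n"
  shows "k \<le> card {i\<in>{1..n}. PV i w \<le> ordered_pv PV n w k}"
proof -
  define xs where "xs = map (\<lambda>j. PV j w) [1..<Suc n]"
  define ys where "ys = sort xs"
  define t where "t = ys ! (k-1)"
  have t: "ordered_pv PV n w k = t" by (simp add: ordered_pv_def t_def ys_def xs_def)
  have len: "length ys = n" by (simp add: ys_def xs_def)
  have "card {i\<in>{1..n}. PV i w \<le> t} = length (filter (\<lambda>j. PV j w \<le> t) [1..<Suc n])"
    by (subst distinct_length_filter) (auto intro: arg_cong[where f=card])
  also have "\<dots> = length (filter (\<lambda>v. v \<le> t) xs)" by (simp add: xs_def filter_map comp_def)
  also have "\<dots> = length (filter (\<lambda>v. v \<le> t) ys)"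
    by (metis ys_def mset_sort mset_filter size_mset)
  finally have eq: "card {i\<in>{1..n}. PV i w \<le> t} = length (filter (\<lambda>v. v \<le> t) ys)" .
  have srt: "sorted ys" by (simp add: ys_def)
  have "filter (\<lambda>v. v\<le>t) (take k ys) = take k ys"
  proof (rule filter_True, rule ballI)
    fix x assume "x \<in> set (take k ys)"
    then obtain i where i: "i < length (take k ys)" "x = take k ys ! i" by (metis in_set_conv_nth)
    then have "i \<le> k - 1" "k - 1 < length ys" using assms len by auto
    then show "x \<le> t" using i srt unfolding t_def by (simp add: sorted_nth_mono)
  qed
  then have "length (filter (\<lambda>v. v\<le>t) (take k ys)) = k" using assms len by simp
  moreover have "length (filter (\<lambda>v. v\<le>t) ys) = length (filter (\<lambda>v. v\<le>t) (take k ys)) + length (filter (\<lambda>v. v\<le>t) (drop k ys))"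
    by (metis append_take_drop_id filter_append length_append)
  ultimately show ?thesis using eq t by simp
qed

lemma key:
  fixes c :: "nat \<Rightarrow> real"
  assumes "c 0 = 0" "\<And>s. 1 \<le> s \<Longrightarrow> s \<le> n \<Longrightarrow> c (s-1) \<le> c s"
    "1 \<le> k" "k \<le> n" "0 < x" "x \<le> c k"
  shows "1 / real k \<le> (\<Sum>s=1..n. (1/real s) * ((if x \<le> c s then 1 else 0) - (if x \<le> c (s-1) then 1 else 0)))"
proof -
  define s0 where "s0 = (LEAST s. x \<le> c s)"
  have s0k: "s0 \<le> k" unfolding s0_def using assms(6) by (rule Least_le)
  have xs0: "x \<le> c s0" unfolding s0_def using assms(6) by (rule LeastI)
  have s01: "s0 \<ge> 1" using xs0 assms by (cases s0) auto
  have nx: "\<not> x \<le> c (s0 - 1)" using s01 unfolding s0_def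
    by (metis One_nat_def diff_less not_less_Least s0_def zero_less_one less_le_trans)
  have "1/real k \<le> 1 / real s0" using s0k s01 by (simp add: frac_le)
  also have "\<dots> = (1/real s0) * ((if x \<le> c s0 then 1 else 0) - (if x \<le> c (s0-1) then 1 else 0))"
    using xs0 nx by simp
  also have "\<dots> \<le> (\<Sum>s=1..n. (1/real s) * ((if x \<le> c s then 1 else 0) - (if x \<le> c (s-1) then 1 else 0)))"
  proof (rule member_le_sum)
    show "s0 \<in> {1..n}" using s01 s0k assms by auto
    fix s assume "s \<in> {1..n} - {s0}"
    then have "c (s-1) \<le> c s" using assms(2) by auto
    then show "0 \<le> (1/real s) * ((if x \<le> c s then 1 else 0) - (if x \<le> c (s-1) then 1 else 0))"
      by auto
  qed simp
  finally show ?thesis .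
qed

lemma termnn:
  fixes a b x :: real
  assumes "a \<le> b" "s \<ge> 1"
  shows "0 \<le> (1/real s) * ((if x \<le> b then 1 else 0) - (if x \<le> a then 1 else 0))"
  using assms by auto

theorem proposition1:
  fixes M :: "'a measure" and PV :: "nat \<Rightarrow> 'a \<Rightarrow> real" and n :: nat
    and I :: "nat set" and F :: "nat \<Rightarrow> real \<Rightarrow> real" and c :: "nat \<Rightarrow> real"
  assumes "prob_space M"
    and "\<forall>i\<in>{1..n}. PV i \<in> borel_measurable M"
    and "\<forall>i\<in>{1..n}. \<forall>w\<in>space M. 0 \<le> PV i w \<and> PV i w \<le> 1"
    and "I \<subseteq> {1..n}"
    and "\<forall>j\<in>I. \<forall>x. measure M {w\<in>space M. PV j w \<le> x} = F j x"
    and "\<forall>i\<in>{1..n}. mono (F i)"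
    and "\<forall>i\<in>{1..n}. \<forall>u\<in>{0<..<1}. F i u \<le> u"
    and "c 0 = 0"
    and "\<forall>i\<in>{1..n}. 0 \<le> c i \<and> c i \<le> 1"
    and "\<forall>i j. 1 \<le> i \<and> i \<le> j \<and> j \<le> n \<longrightarrow> c i \<le> c j"
  shows "FDR M PV n c I
           \<le> (\<Sum>r=1..n. \<Sum>j\<in>I. (1 / real r) * (F j (c r) - F j (c (r - 1))))
       \<and> (\<Sum>r=1..n. \<Sum>j\<in>I. (1 / real r) * (F j (c r) - F j (c (r - 1))))
           \<le> (\<Sum>r=1..n. (1 / real r) *
                 ((\<Sum>i=1..n. F i (c r)) - (\<Sum>i=1..n. F i (c (r - 1)))))"
proof -
  interpret prob_space M by fact
  have cmono: "\<And>s. 1 \<le> s \<Longrightarrow> s \<le> n \<Longrightarrow> c (s-1) \<le> c s"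
  proof -
    fix s :: nat assume s: "1 \<le> s" "s \<le> n"
    show "c (s-1) \<le> c s"
    proof (cases "s = 1")
      case True then show ?thesis using assms(8,9) s by auto
    next
      case False then show ?thesis using assms(10) s by auto
    qed
  qed
  have finI: "finite I" using assms(4) finite_subset by blast
  have Fd: "\<And>i s. i \<in> {1..n} \<Longrightarrow> s \<in> {1..n} \<Longrightarrow> 0 \<le> F i (c s) - F i (c (s-1))"
    using cmono assms(6) by (auto simp: mono_def)
  have F0: "F j 0 = 0" if j: "j \<in> I" for j
  proof -
    have ge: "0 \<le> F j 0" using assms(5) j by (metis measure_nonneg)
    have jn: "j \<in> {1..n}" using j assms(4) by auto
    show ?thesis
    proof (rule ccontr)
      assume "F j 0 \<noteq> 0"
      then have p: "0 < F j 0" using ge by simp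
      define u where "u = min (F j 0 / 2) (1/2)"
      have "u \<in> {0<..<1}" using p by (auto simp: u_def)
      then have "F j u \<le> u" using assms(7) jn by auto
      moreover have "F j 0 \<le> F j u" using assms(6) jn \<open>u \<in> {0<..<1}\<close> by (auto simp: mono_def)
      ultimately show False using p by (auto simp: u_def)
    qed
  qed
  define S where "S j x = {w\<in>space M. PV j w \<le> x}" for j x
  have Ssets: "S j x \<in> sets M" if "j \<in> I" for j x
  proof -
    have "PV j \<in> borel_measurable M" using that assms(2,4) by auto
    then show ?thesis unfolding S_def using borel_measurable_iff_le by blast
  qed
  have intind: "integrable M (indicator (S j x) :: 'a \<Rightarrow> real)" if "j \<in> I" for j x
    using Ssets[OF that] by (simp add: integrable_indicator_iff less_top[symmetric])
  have intind_eq: "integral\<^sup>L M (indicator (S j x) :: 'a \<Rightarrow> real) = F j x" if "j \<in> I" for j x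
    using Ssets[OF that] assms(5) that by (simp add: S_def)
  define g where "g j w = (\<Sum>s=1..n. (1/real s) * (indicator (S j (c s)) w - indicator (S j (c (s-1))) w))
     + (indicator (S j 0) w :: real)" for j w
  define G where "G w = (\<Sum>j\<in>I. g j w)" for w
  have intg: "integrable M (g j)" if "j \<in> I" for j
    unfolding g_def using intind[OF that] by auto
  have intG: "integrable M G" unfolding G_def using intg by auto
  have intgeq: "integral\<^sup>L M (g j) = (\<Sum>s=1..n. (1/real s) * (F j (c s) - F j (c (s-1))))" if "j \<in> I" for j
    unfolding g_def using intind[OF that] intind_eq[OF that] F0[OF that]
    by (simp add: integral_sum integral_diff integrable_diff)
  have intGeq: "integral\<^sup>L M G = (\<Sum>r=1..n. \<Sum>j\<in>I. (1 / real r) * (F j (c r) - F j (c (r - 1))))"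
    unfolding G_def using intg intgeq by (simp add: integral_sum sum.swap[of _ I])
  have RHSnn: "0 \<le> (\<Sum>r=1..n. \<Sum>j\<in>I. (1 / real r) * (F j (c r) - F j (c (r - 1))))"
    using Fd assms(4) by (intro sum_nonneg) auto
  have pt: "real (stepup_V PV n c I w) / max (real (stepup_R PV n c w)) 1 \<le> G w" if w: "w \<in> space M" for w
  proof -
    have ind: "indicator (S j x) w = (if PV j w \<le> x then 1 else (0::real))" for j x
      using w by (simp add: S_def indicator_def)
    have gnn: "0 \<le> g j w" for j
      unfolding g_def ind by (intro add_nonneg_nonneg sum_nonneg termnn cmono) (auto simp: indicator_def)
    define k where "k = stepup_k PV n c w"
    define Rej where "Rej = stepup_rejected PV n c w"
    define m where "m = max (real (card Rej)) 1"
    have m1: "m \<ge> 1" by (simp add: m_def)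
    have "real (stepup_V PV n c I w) / max (real (stepup_R PV n c w)) 1 = real (card (I \<inter> Rej)) / m"
      by (simp add: stepup_V_def stepup_R_def Rej_def m_def Int_commute)
    also have "\<dots> = (\<Sum>j\<in>I. (if j \<in> Rej then 1/m else 0))"
      using finI by (simp add: sum.If_cases Int_def)
    also have "\<dots> \<le> G w" unfolding G_def
    proof (rule sum_mono)
      fix j assume j: "j \<in> I"
      show "(if j \<in> Rej then 1/m else 0) \<le> g j w"
      proof (cases "j \<in> Rej")
        case False then show ?thesis using gnn by simp
      next
        case True
        then have k0: "k \<noteq> 0" by (simp add: Rej_def stepup_rejected_def k_def Let_def split: if_splits)
        have ex: "\<exists>i\<in>{1..n}. ordered_pv PV n w i \<le> c i"
        proof (rule ccontr)
          assume "\<not> (\<exists>i\<in>{1..n}. ordered_pv PV n w i \<le> c i)"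
          then have "k = 0" unfolding k_def stepup_k_def by (rule if_not_P)
          then show False using k0 by simp
        qed
        then have kdef: "k = Max {i\<in>{1..n}. ordered_pv PV n w i \<le> c i}"
          by (simp add: k_def stepup_k_def)
        have "k \<in> {i\<in>{1..n}. ordered_pv PV n w i \<le> c i}"
          unfolding kdef using ex by (intro Max_in) auto
        then have kn: "1 \<le> k" "k \<le> n" "ordered_pv PV n w k \<le> c k" by auto
        have Rejeq: "Rej = {i\<in>{1..n}. PV i w \<le> ordered_pv PV n w k}"
          using k0 by (simp add: Rej_def stepup_rejected_def k_def Let_def)
        have kR: "k \<le> card Rej" unfolding Rejeq by (rule card_rej[OF kn(1,2)])
        have mk: "1/m \<le> 1 / real k" using kR kn m1 by (simp add: m_def frac_le)
        have pj: "PV j w \<le> c k" using True Rejeq kn by auto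
        show ?thesis
        proof (cases "PV j w \<le> 0")
          case True
          have "1/m \<le> 1" using m1 by simp
          also have "\<dots> \<le> g j w" unfolding g_def ind using True by (intro add_increasing sum_nonneg termnn cmono) auto
          finally show ?thesis using \<open>j \<in> Rej\<close> by simp
        next
          case False
          have "1/m \<le> 1/real k" by (rule mk)
          also have "\<dots> \<le> (\<Sum>s=1..n. (1/real s) * ((if PV j w \<le> c s then 1 else 0) - (if PV j w \<le> c (s-1) then 1 else 0)))"
            using key[OF assms(8) cmono kn(1,2) _ pj] False by (simp add: not_le)
          also have "\<dots> \<le> g j w" unfolding g_def ind by simp
          finally show ?thesis using \<open>j \<in> Rej\<close> by simp
        qed
      qed
    qed
    finally show ?thesis .
  qed
  have part1: "FDR M PV n c I \<le> (\<Sum>r=1..n. \<Sum>j\<in>I. (1 / real r) * (F j (c r) - F j (c (r - 1))))"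
  proof (cases "integrable M (\<lambda>w. real (stepup_V PV n c I w) / max (real (stepup_R PV n c w)) 1)")
    case True
    have "FDR M PV n c I \<le> integral\<^sup>L M G"
      unfolding FDR_def using True intG pt by (rule integral_mono)
    then show ?thesis using intGeq by simp
  next
    case False
    then show ?thesis using RHSnn by (simp add: FDR_def not_integrable_integral_eq)
  qed
  have part2: "(\<Sum>r=1..n. \<Sum>j\<in>I. (1 / real r) * (F j (c r) - F j (c (r - 1))))
           \<le> (\<Sum>r=1..n. (1 / real r) *
                 ((\<Sum>i=1..n. F i (c r)) - (\<Sum>i=1..n. F i (c (r - 1)))))"
  proof (rule sum_mono)
    fix r assume r: "r \<in> {1..n}"
    have "(\<Sum>j\<in>I. (1 / real r) * (F j (c r) - F j (c (r - 1)))) = (1/real r) * (\<Sum>j\<in>I. F j (c r) - F j (c (r - 1)))"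
      by (simp add: sum_distrib_left)
    also have "\<dots> \<le> (1/real r) * (\<Sum>j\<in>{1..n}. F j (c r) - F j (c (r - 1)))"
      using Fd r assms(4) by (intro mult_left_mono sum_mono2) auto
    also have "\<dots> = (1 / real r) * ((\<Sum>i=1..n. F i (c r)) - (\<Sum>i=1..n. F i (c (r - 1))))"
      by (simp add: sum_subtractf)
    finally show "(\<Sum>j\<in>I. (1 / real r) * (F j (c r) - F j (c (r - 1)))) \<le> (1 / real r) * ((\<Sum>i=1..n. F i (c r)) - (\<Sum>i=1..n. F i (c (r - 1))))" .
  qed
  show ?thesis using part1 part2 by blast
qed
end
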